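(* For any sample $(x,u)$, generative parameters $\theta=(f,T,\lambda)$, inference parameters $\phi$, and $\alpha\in[0,1]$, $$\mathrm{ELBO}_{\theta,\phi}(\alpha;x,u)=\alpha\,\mathrm{ELBO}_{\theta,\phi}(1;x,u)+(1-\alpha)\,\mathrm{ELBO}_{\theta,\phi}(0;x,u)+\alpha\,\mathcal{D}^{1-\alpha}_{\mathrm{Skew}}\big(q_\phi(\cdot|x)\,\|\,q_\phi(\cdot|x,u)\big)+(1-\alpha)\,\mathcal{D}^{\alpha}_{\mathrm{Skew}}\big(q_\phi(\cdot|x,u)\,\|\,q_\phi(\cdot|x)\big),$$ where $\mathcal{D}^{\beta}_{\mathrm{Skew}}(p\|q):=\mathcal{D}_{\mathrm{KL}}\big(p\,\|\,(1-\beta)p+\beta q\big)$.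
   Context: Observations $x\in\mathbb{R}^{d_X}$, covariates $u\in\mathbb{R}^{d_U}$, latents $z\in\mathbb{R}^{d_Z}$, $d_Z<d_X$. Generative parameters $\theta=(f,T,\lambda)$: mixing function $f:\mathbb{R}^{d_Z}\to\mathbb{R}^{d_X}$, label prior density $p_{T,\lambda}(z|u)=\prod_{i=1}^{d_Z}\exp(\lambda_i(u)\cdot T_i(z_i)-A(u)+B(z_i))$ (conditionally factorial exponential family with known $A,B$), decoder density $p_f(x|z)=p_\epsilon(x-f(z))$ for a fixed noise density $p_\epsilon$. Inference parameters $\phi$ determine an encoder density $q_\phi(z|x)$ and a posterior density $q_\phi(z|x,u)$ on $\mathbb{R}^{d_Z}$. For $\alpha\in[0,1]$, with $m_\alpha=\alpha q_\phi(\cdot|x)+(1-\alpha)q_\phi(\cdot|x,u)$, $\mathrm{ELBO}_{\theta,\phi}(\alpha;x,u)=\mathbb{E}_{z\sim m_\alpha}\log p_f(x|z)-\mathcal{D}_{\mathrm{KL}}(m_\alpha\|p_{T,\lambda}(\cdot|u))$. All expectations and divergences appearing are assumed finite. *)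

theory Defs
  imports "HOL-Analysis.Analysis"
begin

text \<open>Densities on R^dZ are real-valued functions, integrated against Lebesgue measure
  (lborel).\<close>

definition KL_div :: "('z::euclidean_space \<Rightarrow> real) \<Rightarrow> ('z \<Rightarrow> real) \<Rightarrow> real" where
  "KL_div p q = (LINT z|lborel. p z * ln (p z / q z))"

definition skew_div :: "real \<Rightarrow> ('z::euclidean_space \<Rightarrow> real) \<Rightarrow> ('z \<Rightarrow> real) \<Rightarrow> real" where
  "skew_div \<beta> p q = KL_div p (\<lambda>z. (1 - \<beta>) * p z + \<beta> * q z)"

definition prior_dens ::
  "('dz::finite \<Rightarrow> real \<Rightarrow> real^'k::finite) \<Rightarrow> (real^'du::finite \<Rightarrow> 'dz \<Rightarrow> real^'k)
    \<Rightarrow> (real^'du \<Rightarrow> real) \<Rightarrow> (real \<Rightarrow> real) \<Rightarrow> real^'du \<Rightarrow> real^'dz \<Rightarrow> real" where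
  "prior_dens T lam A B u z = (\<Prod>i\<in>UNIV. exp (lam u i \<bullet> T i (z $ i) - A u + B (z $ i)))"

definition dec_dens ::
  "(real^'dx::finite \<Rightarrow> real) \<Rightarrow> (real^'dz::finite \<Rightarrow> real^'dx) \<Rightarrow> real^'dx \<Rightarrow> real^'dz \<Rightarrow> real" where
  "dec_dens p_eps f x z = p_eps (x - f z)"

definition mix_dens ::
  "('phi \<Rightarrow> real^'dx::finite \<Rightarrow> real^'dz::finite \<Rightarrow> real)
    \<Rightarrow> ('phi \<Rightarrow> real^'dx \<Rightarrow> real^'du::finite \<Rightarrow> real^'dz \<Rightarrow> real)
    \<Rightarrow> 'phi \<Rightarrow> real \<Rightarrow> real^'dx \<Rightarrow> real^'du \<Rightarrow> real^'dz \<Rightarrow> real" where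
  "mix_dens q_enc q_post \<phi> \<alpha> x u z = \<alpha> * q_enc \<phi> x z + (1 - \<alpha>) * q_post \<phi> x u z"

definition ELBO ::
  "(real^'dx::finite \<Rightarrow> real) \<Rightarrow> (real^'dz::finite \<Rightarrow> real^'dx)
    \<Rightarrow> ('dz \<Rightarrow> real \<Rightarrow> real^'k::finite) \<Rightarrow> (real^'du::finite \<Rightarrow> 'dz \<Rightarrow> real^'k)
    \<Rightarrow> (real^'du \<Rightarrow> real) \<Rightarrow> (real \<Rightarrow> real)
    \<Rightarrow> ('phi \<Rightarrow> real^'dx \<Rightarrow> real^'dz \<Rightarrow> real)
    \<Rightarrow> ('phi \<Rightarrow> real^'dx \<Rightarrow> real^'du \<Rightarrow> real^'dz \<Rightarrow> real)
    \<Rightarrow> 'phi \<Rightarrow> real \<Rightarrow> real^'dx \<Rightarrow> real^'du \<Rightarrow> real" where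
  "ELBO p_eps f T lam A B q_enc q_post \<phi> \<alpha> x u =
     (LINT z|lborel. mix_dens q_enc q_post \<phi> \<alpha> x u z * ln (dec_dens p_eps f x z))
     - KL_div (mix_dens q_enc q_post \<phi> \<alpha> x u) (prior_dens T lam A B u)"

end

theory Submission
  imports Defs
begin

lemma pw1:
  fixes a m p c :: real
  assumes "c*a = 0 \<or> (a > 0 \<and> m > 0)" "p > 0"
  shows "c*(a*ln(a/p)) - c*(a*ln(a/m)) = c*a*ln(m/p)"
proof (cases "c*a = 0")
  case True
  have "c*(a*ln(a/p)) = (c*a)*ln(a/p)" "c*(a*ln(a/m)) = (c*a)*ln(a/m)" by (simp_all only: mult.assoc)
  then show ?thesis by (simp only: True mult_zero_left diff_self)
next
  case False
  then have h: "a > 0" "m > 0" using assms by auto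
  have "ln(a/p) = ln a - ln p" using h assms by (simp add: ln_div)
  moreover have "ln(a/m) = ln a - ln m" using h by (simp add: ln_div)
  moreover have "ln(m/p) = ln m - ln p" using h assms by (simp add: ln_div)
  ultimately show ?thesis by (simp add: right_diff_distrib)
qed

lemma pw:
  fixes a b p al :: real
  assumes "a \<ge> 0" "b \<ge> 0" "p > 0" "0 \<le> al" "al \<le> 1"
  shows "(al*a+(1-al)*b) * ln((al*a+(1-al)*b)/p) = al*(a*ln(a/p)) - al*(a*ln(a/((1-(1-al))*a+(1-al)*b))) + (1-al)*(b*ln(b/p)) - (1-al)*(b*ln(b/((1-al)*b+al*a)))"
proof -
  define m where "m = al*a+(1-al)*b"
  have q1: "al*a \<ge> 0" "(1-al)*b \<ge> 0" using assms by auto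
  have e1: "(1-(1-al))*a+(1-al)*b = m" "(1-al)*b+al*a = m" unfolding m_def by simp_all
  have c1: "al*a = 0 \<or> (a > 0 \<and> m > 0)"
  proof (cases "al*a = 0")
    case False
    then have "a \<noteq> 0" by auto
    moreover have "al*a > 0" using False q1 by linarith
    ultimately show ?thesis using assms(1) q1 unfolding m_def by linarith
  qed simp
  have c2: "(1-al)*b = 0 \<or> (b > 0 \<and> m > 0)"
  proof (cases "(1-al)*b = 0")
    case False
    then have "b \<noteq> 0" by auto
    moreover have "(1-al)*b > 0" using False q1 by linarith
    ultimately show ?thesis using assms(2) q1 unfolding m_def by linarith
  qed simp
  have A: "al*(a*ln(a/p)) - al*(a*ln(a/m)) = al*a*ln(m/p)"
    by (rule pw1[OF c1 assms(3)])
  have B: "(1-al)*(b*ln(b/p)) - (1-al)*(b*ln(b/m)) = (1-al)*b*ln(m/p)"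
    by (rule pw1[OF c2 assms(3)])
  have "m * ln(m/p) = al*a*ln(m/p) + (1-al)*b*ln(m/p)" unfolding m_def by (simp only: distrib_right)
  then show ?thesis unfolding e1 m_def[symmetric] using A B by linarith
qed

lemma lin4:
  fixes f1 f2 f3 f4 :: "'a \<Rightarrow> real"
  assumes "integrable M f1" "integrable M f2" "integrable M f3" "integrable M f4"
  shows "(LINT z|M. c1 * f1 z - c2 * f2 z + c3 * f3 z - c4 * f4 z)
    = c1 * integral\<^sup>L M f1 - c2 * integral\<^sup>L M f2 + c3 * integral\<^sup>L M f3 - c4 * integral\<^sup>L M f4"
  using assms by simp

theorem proposition5:
  fixes p_eps :: "real^'dx::finite \<Rightarrow> real"
    and f :: "real^'dz::finite \<Rightarrow> real^'dx"
    and T :: "'dz \<Rightarrow> real \<Rightarrow> real^'k::finite"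
    and lam :: "real^'du::finite \<Rightarrow> 'dz \<Rightarrow> real^'k"
    and A :: "real^'du \<Rightarrow> real" and B :: "real \<Rightarrow> real"
    and q_enc :: "'phi \<Rightarrow> real^'dx \<Rightarrow> real^'dz \<Rightarrow> real"
    and q_post :: "'phi \<Rightarrow> real^'dx \<Rightarrow> real^'du \<Rightarrow> real^'dz \<Rightarrow> real"
    and \<phi> :: 'phi and \<alpha> :: real and x :: "real^'dx" and u :: "real^'du"
  assumes dims: "CARD('dz) < CARD('dx)"
    and alpha: "0 \<le> \<alpha>" "\<alpha> \<le> 1"
    \<comment> \<open>density hypotheses\<close>
    and noise: "p_eps \<in> borel_measurable lborel" "\<forall>e. 0 \<le> p_eps e"
               "integrable lborel p_eps" "integral\<^sup>L lborel p_eps = 1"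
    and prior: "prior_dens T lam A B u \<in> borel_measurable lborel"
               "integrable lborel (prior_dens T lam A B u)"
               "integral\<^sup>L lborel (prior_dens T lam A B u) = 1"
    and enc: "q_enc \<phi> x \<in> borel_measurable lborel" "\<forall>z. 0 \<le> q_enc \<phi> x z"
             "integrable lborel (q_enc \<phi> x)" "integral\<^sup>L lborel (q_enc \<phi> x) = 1"
    and post: "q_post \<phi> x u \<in> borel_measurable lborel" "\<forall>z. 0 \<le> q_post \<phi> x u z"
              "integrable lborel (q_post \<phi> x u)" "integral\<^sup>L lborel (q_post \<phi> x u) = 1"
    \<comment> \<open>all expectations and divergences appearing are finite\<close>
    and fin_exp: "\<forall>\<beta>\<in>{\<alpha>, 1, 0}. integrable lborel
                    (\<lambda>z. mix_dens q_enc q_post \<phi> \<beta> x u z * ln (dec_dens p_eps f x z))"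
    and fin_kl: "\<forall>\<beta>\<in>{\<alpha>, 1, 0}. integrable lborel
                    (\<lambda>z. mix_dens q_enc q_post \<phi> \<beta> x u z
                         * ln (mix_dens q_enc q_post \<phi> \<beta> x u z / prior_dens T lam A B u z))"
    and fin_skew1: "integrable lborel (\<lambda>z. q_enc \<phi> x z
                      * ln (q_enc \<phi> x z / ((1 - (1 - \<alpha>)) * q_enc \<phi> x z + (1 - \<alpha>) * q_post \<phi> x u z)))"
    and fin_skew2: "integrable lborel (\<lambda>z. q_post \<phi> x u z
                      * ln (q_post \<phi> x u z / ((1 - \<alpha>) * q_post \<phi> x u z + \<alpha> * q_enc \<phi> x z)))"
  shows "ELBO p_eps f T lam A B q_enc q_post \<phi> \<alpha> x u =
           \<alpha> * ELBO p_eps f T lam A B q_enc q_post \<phi> 1 x u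
         + (1 - \<alpha>) * ELBO p_eps f T lam A B q_enc q_post \<phi> 0 x u
         + \<alpha> * skew_div (1 - \<alpha>) (q_enc \<phi> x) (q_post \<phi> x u)
         + (1 - \<alpha>) * skew_div \<alpha> (q_post \<phi> x u) (q_enc \<phi> x)"
proof -
  define a where "a = q_enc \<phi> x"
  define b where "b = q_post \<phi> x u"
  define p where "p = prior_dens T lam A B u"
  define d where "d = dec_dens p_eps f x"
  have ppos: "p z > 0" for z unfolding p_def prior_dens_def by (rule prod_pos) simp
  have a0: "a z \<ge> 0" for z using enc unfolding a_def by auto
  have b0: "b z \<ge> 0" for z using post unfolding b_def by auto
  have m1: "mix_dens q_enc q_post \<phi> 1 x u = a" by (rule ext) (simp add: mix_dens_def a_def)
  have m0: "mix_dens q_enc q_post \<phi> 0 x u = b" by (rule ext) (simp add: mix_dens_def b_def)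
  have mA: "mix_dens q_enc q_post \<phi> \<alpha> x u = (\<lambda>z. \<alpha> * a z + (1-\<alpha>) * b z)"
    by (rule ext) (simp add: mix_dens_def a_def b_def)
  have iad: "integrable lborel (\<lambda>z. a z * ln (d z))" using fin_exp m1 unfolding d_def by auto
  have ibd: "integrable lborel (\<lambda>z. b z * ln (d z))" using fin_exp m0 unfolding d_def by auto
  have iap: "integrable lborel (\<lambda>z. a z * ln (a z / p z))" using fin_kl m1 unfolding p_def by auto
  have ibp: "integrable lborel (\<lambda>z. b z * ln (b z / p z))" using fin_kl m0 unfolding p_def by auto
  have is1: "integrable lborel (\<lambda>z. a z * ln (a z / ((1 - (1 - \<alpha>)) * a z + (1 - \<alpha>) * b z)))"
    using fin_skew1 unfolding a_def b_def .
  have is2: "integrable lborel (\<lambda>z. b z * ln (b z / ((1 - \<alpha>) * b z + \<alpha> * a z)))"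
    using fin_skew2 unfolding a_def b_def .
  have E: "(LINT z|lborel. (\<alpha> * a z + (1-\<alpha>) * b z) * ln (d z))
      = \<alpha> * (LINT z|lborel. a z * ln (d z)) + (1-\<alpha>) * (LINT z|lborel. b z * ln (d z))"
  proof -
    have "(LINT z|lborel. (\<alpha> * a z + (1-\<alpha>) * b z) * ln (d z))
        = (LINT z|lborel. \<alpha> * (a z * ln (d z)) + (1-\<alpha>) * (b z * ln (d z)))"
      by (simp add: algebra_simps)
    also have "\<dots> = (LINT z|lborel. \<alpha> * (a z * ln (d z))) + (LINT z|lborel. (1-\<alpha>) * (b z * ln (d z)))"
      by (intro Bochner_Integration.integral_add integrable_mult_right iad ibd)
    also have "\<dots> = \<alpha> * (LINT z|lborel. a z * ln (d z)) + (1-\<alpha>) * (LINT z|lborel. b z * ln (d z))"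
      by simp
    finally show ?thesis .
  qed
  let ?s1 = "\<lambda>z. a z * ln (a z / ((1 - (1 - \<alpha>)) * a z + (1 - \<alpha>) * b z))"
  let ?s2 = "\<lambda>z. b z * ln (b z / ((1 - \<alpha>) * b z + \<alpha> * a z))"
  have K: "(LINT z|lborel. (\<alpha> * a z + (1-\<alpha>) * b z) * ln ((\<alpha> * a z + (1-\<alpha>) * b z) / p z))
      = \<alpha> * (LINT z|lborel. a z * ln (a z / p z)) - \<alpha> * (LINT z|lborel. ?s1 z)
        + (1-\<alpha>) * (LINT z|lborel. b z * ln (b z / p z)) - (1-\<alpha>) * (LINT z|lborel. ?s2 z)"
  proof -
    have "(LINT z|lborel. (\<alpha> * a z + (1-\<alpha>) * b z) * ln ((\<alpha> * a z + (1-\<alpha>) * b z) / p z))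
        = (LINT z|lborel. \<alpha> * (a z * ln (a z / p z)) - \<alpha> * ?s1 z
        + (1-\<alpha>) * (b z * ln (b z / p z)) - (1-\<alpha>) * ?s2 z)"
      by (intro Bochner_Integration.integral_cong refl pw a0 b0 ppos alpha)
    also have "\<dots> = \<alpha> * (LINT z|lborel. a z * ln (a z / p z)) - \<alpha> * (LINT z|lborel. ?s1 z)
        + (1-\<alpha>) * (LINT z|lborel. b z * ln (b z / p z)) - (1-\<alpha>) * (LINT z|lborel. ?s2 z)"
      by (rule lin4[OF iap is1 ibp is2])
    finally show ?thesis .
  qed
  have final: "\<And>ea eb ka kb t1 t2 em km. em = \<alpha>*ea+(1-\<alpha>)*eb \<Longrightarrow>
     km = \<alpha>*ka - \<alpha>*t1 + (1-\<alpha>)*kb - (1-\<alpha>)*t2 \<Longrightarrow>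
     em - km = \<alpha>*(ea - ka) + (1-\<alpha>)*(eb-kb) + \<alpha>*t1 + (1-\<alpha>)*t2"
    by (simp add: algebra_simps)
  show ?thesis
    unfolding ELBO_def skew_div_def KL_div_def m1 m0 mA
    unfolding a_def[symmetric] b_def[symmetric] p_def[symmetric] d_def[symmetric]
    by (rule final[OF E K])
qed

end
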